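(* Let $k \ge 1$ and $x \in \{2,3,4,5\}$ be integers, $m = 4k+x$, $\theta = 2\pi/m$. Let $u, v, w$ be points in general position with $w \in C_0^u$ and $v \in T_{uw}$, with $v$ to the left of $w$. Let $a$ be the intersection point of the side of $T_{uw}$ opposite $u$ with the left boundary ray of $C_0^v$. Let $C_i^v$ be the cone of $v$ containing $w$, and let $c$ and $d$ be the upper and lower corners of $T_{vw}$ (the two corners other than $v$). If $1 \le i \le k-1$, or if $i = k$ and $|cw| \le |dw|$, then $$\max\{|vc| + |cw|,\ |vd| + |dw|\} \le |va| + |aw| \quad\text{and}\quad \max\{|cw|, |dw|\} \le |aw|.$$
   Context: Cones: for $m \ge 2$, $\theta = 2\pi/m$; around each point $u$ draw $m$ rays with consecutive angular separation $\theta$, oriented so the vertical upward ray from $u$ bisects a cone, called $C_0^u$; cones are numbered $C_0^u,\dots,C_{m-1}^u$ clockwise, with the same orientation at every point. General position: no two points on a line parallel to a cone boundary ray, no two points on a line perpendicular to a cone bisector, no three points collinear. Canonical triangle: if $w$ lies in cone $C$ of $u$, $T_{uw}$ is the triangle bounded by the two boundary rays of $C$ and the line through $w$ perpendicular to the bisector of $C$. *)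

theory Defs
  imports "HOL-Analysis.Analysis"
begin

type_synonym point = "real \<times> real"

text \<open>Angles are measured clockwise from the vertical upward direction.\<close>
definition cdir :: "real \<Rightarrow> point" where
  "cdir \<psi> = (sin \<psi>, cos \<psi>)"

definition cone_angle :: "nat \<Rightarrow> real" where
  "cone_angle m = 2 * pi / real m"

definition cone :: "nat \<Rightarrow> point \<Rightarrow> nat \<Rightarrow> point set" where
  "cone m u j = {p. p \<noteq> u \<and> (\<exists>\<psi> r. real j * cone_angle m - cone_angle m / 2 \<le> \<psi>
        \<and> \<psi> < real j * cone_angle m + cone_angle m / 2 \<and> r > 0 \<and> p = u + r *\<^sub>R cdir \<psi>)}"

definition canon_tri :: "nat \<Rightarrow> point \<Rightarrow> nat \<Rightarrow> point \<Rightarrow> point set" where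
  "canon_tri m u j w = {p. (\<exists>\<psi> r. real j * cone_angle m - cone_angle m / 2 \<le> \<psi>
        \<and> \<psi> \<le> real j * cone_angle m + cone_angle m / 2 \<and> r \<ge> 0 \<and> p = u + r *\<^sub>R cdir \<psi>)
     \<and> inner (p - u) (cdir (real j * cone_angle m)) \<le> inner (w - u) (cdir (real j * cone_angle m))}"

definition tri_corners :: "nat \<Rightarrow> point \<Rightarrow> nat \<Rightarrow> point \<Rightarrow> point set" where
  "tri_corners m u j w = {p. \<exists>\<phi> r. \<phi> \<in> {real j * cone_angle m - cone_angle m / 2,
        real j * cone_angle m + cone_angle m / 2} \<and> r \<ge> 0 \<and> p = u + r *\<^sub>R cdir \<phi>
     \<and> inner (p - u) (cdir (real j * cone_angle m)) = inner (w - u) (cdir (real j * cone_angle m))}"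

definition cross :: "point \<Rightarrow> point \<Rightarrow> real" where
  "cross a b = fst a * snd b - snd a * fst b"

definition general_position :: "nat \<Rightarrow> point set \<Rightarrow> bool" where
  "general_position m P \<longleftrightarrow>
     (\<forall>p\<in>P. \<forall>q\<in>P. p \<noteq> q \<longrightarrow>
        (\<forall>j<m. cross (q - p) (cdir ((real j + 1/2) * cone_angle m)) \<noteq> 0)
      \<and> (\<forall>j<m. inner (q - p) (cdir (real j * cone_angle m)) \<noteq> 0))
   \<and> (\<forall>p\<in>P. \<forall>q\<in>P. \<forall>r\<in>P. p \<noteq> q \<and> p \<noteq> r \<and> q \<noteq> r \<longrightarrow> cross (q - p) (r - p) \<noteq> 0)"

end

theory Submission
  imports Defs
begin

lemma norm_cdir [simp]: "norm (cdir a) = 1"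
  by (simp add: cdir_def norm_Pair)

lemma inner_cdir: "inner (cdir a) (cdir b) = cos (a - b)"
  by (simp add: cdir_def cos_diff algebra_simps)

lemma cdir_rot: "cdir (q + b) = cos b *\<^sub>R cdir q + sin b *\<^sub>R cdir (q + pi/2)"
  by (simp add: cdir_def sin_add cos_add algebra_simps)

lemma dist_corner:
  assumes "r * cos \<phi> = \<rho> * cos b"
  shows "dist (v + r *\<^sub>R cdir (q + \<phi>)) (v + \<rho> *\<^sub>R cdir (q + b)) = \<bar>r * sin \<phi> - \<rho> * sin b\<bar>"
proof -
  have "(v + r *\<^sub>R cdir (q + \<phi>)) - (v + \<rho> *\<^sub>R cdir (q + b))
        = (r * cos \<phi> - \<rho> * cos b) *\<^sub>R cdir q + (r * sin \<phi> - \<rho> * sin b) *\<^sub>R cdir (q + pi/2)"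
    unfolding cdir_rot[of q \<phi>] cdir_rot[of q b] by (simp add: algebra_simps)
  also have "\<dots> = (r * sin \<phi> - \<rho> * sin b) *\<^sub>R cdir (q + pi/2)" using assms by simp
  finally show ?thesis by (simp add: dist_norm)
qed

lemma sin_le_aux:
  fixes x y :: real
  assumes "0 \<le> x" "x \<le> y" "x + y \<le> pi" shows "sin x \<le> sin y"
proof (cases "y \<le> pi/2")
  case True then show ?thesis using assms by (subst sin_mono_le_eq) auto
next
  case False
  have "sin x \<le> sin (pi - y)" using assms False by (subst sin_mono_le_eq) auto
  then show ?thesis by simp
qed

lemma F_id:
  fixes x h :: real
  shows "cos x + sin (x + h) = 2 * cos (pi/4 - h/2) * cos (x - (pi/4 - h/2))"
proof -
  define p where "p = pi/4 - h/2"
  have 1: "cos p * cos (x - p) = (cos (p - (x - p)) + cos (p + (x - p))) / 2"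
    by (rule cos_times_cos)
  have 2: "p - (x - p) = pi/2 - (x + h)" "p + (x - p) = x" unfolding p_def by simp_all
  have 3: "cos (pi/2 - (x + h)) = sin (x + h)" using sin_cos_eq[of "x + h"] by simp
  show ?thesis unfolding p_def[symmetric] using 1 unfolding 2 3 by simp
qed

lemma F_le:
  fixes x y h :: real
  assumes "0 \<le> cos (pi/4 - h/2)" "\<bar>y - (pi/4 - h/2)\<bar> \<le> \<bar>x - (pi/4 - h/2)\<bar>" "\<bar>x - (pi/4 - h/2)\<bar> \<le> pi"
  shows "cos x + sin (x + h) \<le> cos y + sin (y + h)"
proof -
  have "cos \<bar>x - (pi/4 - h/2)\<bar> \<le> cos \<bar>y - (pi/4 - h/2)\<bar>"
    using assms by (subst cos_mono_le_eq) auto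
  then have "cos (x - (pi/4 - h/2)) \<le> cos (y - (pi/4 - h/2))" by simp
  then show ?thesis unfolding F_id using assms(1) by (simp add: mult_left_mono)
qed

lemma hmul: "0 < (M::real) \<Longrightarrow> n \<le> M \<Longrightarrow> n * (pi / M) \<le> pi"
proof -
  assume "0 < M" "n \<le> M"
  then have "n * (pi / M) \<le> M * (pi / M)" by (intro mult_right_mono) auto
  then show ?thesis using \<open>0 < M\<close> by simp
qed


lemma corner_char:
  assumes "p \<in> tri_corners m v i w" "w = v + \<rho> *\<^sub>R cdir (real i * cone_angle m + \<beta>)"
    "cos (cone_angle m / 2) \<noteq> 0"
  shows "\<exists>e\<in>{-1,1::real}. p = v + (\<rho> * cos \<beta> / cos (cone_angle m / 2)) *\<^sub>R
             cdir (real i * cone_angle m + e * (cone_angle m / 2))"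
proof -
  define q where "q = real i * cone_angle m"
  define h where "h = cone_angle m / 2"
  obtain \<phi> r where ph: "\<phi> \<in> {q - h, q + h}" "r \<ge> 0" "p = v + r *\<^sub>R cdir \<phi>"
     "inner (p - v) (cdir q) = inner (w - v) (cdir q)"
    using assms(1) unfolding tri_corners_def q_def h_def by blast
  obtain e where e: "e \<in> {-1,1::real}" "\<phi> = q + e * h"
  proof (cases "\<phi> = q - h")
    case True then show ?thesis by (intro that[of "-1"]) auto
  next
    case False then have "\<phi> = q + h" using ph(1) by auto
    then show ?thesis by (intro that[of 1]) auto
  qed
  have "inner (p - v) (cdir q) = r * cos (e * h)" using ph(3) e by (simp add: inner_cdir)
  also have "cos (e * h) = cos h" using e(1) by auto
  finally have 1: "inner (p - v) (cdir q) = r * cos h" .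
  have "inner (w - v) (cdir q) = \<rho> * cos \<beta>" using assms(2) by (simp add: inner_cdir q_def)
  with 1 ph(4) have "r * cos h = \<rho> * cos \<beta>" by simp
  then have "r = \<rho> * cos \<beta> / cos h" using assms(3) unfolding h_def by (simp add: field_simps)
  then show ?thesis using e ph(3) unfolding q_def h_def by auto
qed

theorem mainTheorem3:
  fixes k x m i :: nat and u v w a c d :: point
  assumes "k \<ge> 1" and "x \<in> {2,3,4,5}" and "m = 4 * k + x"
    and "distinct [u, v, w]" and "general_position m {u, v, w}"
    and "w \<in> cone m u 0" and "v \<in> canon_tri m u 0 w" and "fst v < fst w"
    and "\<exists>t\<ge>0. a = v + t *\<^sub>R cdir (- cone_angle m / 2)"
    and "inner (a - u) (cdir 0) = inner (w - u) (cdir 0)"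
    and "i < m" and "w \<in> cone m v i"
    and "c \<in> tri_corners m v i w" and "d \<in> tri_corners m v i w" and "snd d < snd c"
    and "(1 \<le> i \<and> i \<le> k - 1) \<or> (i = k \<and> dist c w \<le> dist d w)"
  shows "max (dist v c + dist c w) (dist v d + dist d w) \<le> dist v a + dist a w
       \<and> max (dist c w) (dist d w) \<le> dist a w"
proof -
  define \<theta> where "\<theta> = cone_angle m"
  define h where "h = \<theta> / 2"
  define q where "q = real i * \<theta>"
  have mge: "real m \<ge> 4 * real k + 2" using assms(2,3) by auto
  have k1: "real k \<ge> 1" using assms(1) by simp
  have i1: "real i \<ge> 1" and ik: "real i \<le> real k" using assms(16) assms(1) by auto
  have mpos: "real m > 0" using mge k1 by linarith
  have hdef: "h = pi / real m" unfolding h_def \<theta>_def cone_angle_def by simp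
  have h0: "h > 0" using hdef mpos by simp
  have Q4: "6 * h \<le> pi" unfolding hdef by (rule hmul) (use mge k1 in auto)
  have qh: "q = 2 * real i * h" unfolding q_def h_def by simp
  have Q1: "q + 4 * h \<le> pi"
  proof -
    have "(2 * real i + 4) * (pi / real m) \<le> pi" by (rule hmul) (use mge k1 ik mpos in auto)
    then show ?thesis unfolding qh hdef by (simp add: algebra_simps)
  qed
  have Q2: "2 * q + 2 * h \<le> pi"
  proof -
    have "(4 * real i + 2) * (pi / real m) \<le> pi" by (rule hmul) (use mge k1 ik mpos in auto)
    then show ?thesis unfolding qh hdef by (simp add: algebra_simps)
  qed
  have Q3: "2 * h \<le> q" unfolding qh using i1 h0 by simp
  have Q5: "2 * q + 6 * h \<le> pi" if "i \<le> k - 1"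
  proof -
    have "real i + 1 \<le> real k" using that assms(1) by linarith
    then have "(4 * real i + 6) * (pi / real m) \<le> pi" by (intro hmul) (use mge mpos in auto)
    then show ?thesis unfolding qh hdef by (simp add: algebra_simps)
  qed
  have co: "cos h > 0" using h0 Q4 by (intro cos_gt_zero_pi) auto
  have s0: "sin h \<ge> 0" using h0 Q4 by (intro sin_ge_zero) auto
  obtain \<psi> \<rho> where w1: "q - h \<le> \<psi>" "\<psi> < q + h" "\<rho> > 0" "w = v + \<rho> *\<^sub>R cdir \<psi>"
    using assms(12) unfolding cone_def q_def h_def \<theta>_def by blast
  define \<beta> where "\<beta> = \<psi> - q"
  have \<psi>\<beta>: "\<psi> = q + \<beta>" unfolding \<beta>_def by simp
  have b1: "- h \<le> \<beta>" "\<beta> < h" using w1 unfolding \<beta>_def by auto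
  have cb: "cos \<beta> > 0" using b1 Q4 by (intro cos_gt_zero_pi) auto
  have w2: "w = v + \<rho> *\<^sub>R cdir (real i * cone_angle m + \<beta>)"
    using w1(4) unfolding \<psi>\<beta> q_def \<theta>_def .
  obtain t where t: "t \<ge> 0" "a = v + t *\<^sub>R cdir (- h)"
    using assms(9) unfolding h_def \<theta>_def by auto
  have "snd a = snd w" using assms(10) by (simp add: cdir_def inner_Pair_0)
  then have tco: "t * cos h = \<rho> * cos \<psi>" using t(2) w1(4) by (simp add: cdir_def)
  have Va: "dist v a = t" using t by (simp add: dist_norm)
  have "dist (fst a) (fst w) \<le> dist a w" by (rule dist_fst_le)
  then have "\<bar>\<rho> * sin \<psi> + t * sin h\<bar> \<le> dist a w"
    using t(2) w1(4) by (simp add: cdir_def dist_real_def abs_minus_commute algebra_simps)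
  then have "\<rho> * sin \<psi> + t * sin h \<le> dist a w" by linarith
  then have "cos h * (\<rho> * sin \<psi> + t * sin h) \<le> cos h * dist a w"
    using co by (intro mult_left_mono) auto
  moreover have "cos h * (\<rho> * sin \<psi> + t * sin h) = \<rho> * sin (\<psi> + h)"
    using tco by (simp add: sin_add algebra_simps)
  ultimately have Aw: "\<rho> * sin (\<psi> + h) \<le> cos h * dist a w" by simp
  have Va': "cos h * dist v a = \<rho> * cos \<psi>" using Va tco by (simp add: mult.commute)
  define R where "R = \<rho> * cos \<beta> / cos h"
  have R0: "R > 0" unfolding R_def using w1 cb co by simp
  have coR: "R * cos h = \<rho> * cos \<beta>" unfolding R_def using co by simp
  have cne: "cos (cone_angle m / 2) \<noteq> 0" using co unfolding h_def \<theta>_def by simp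
  obtain ec where ec: "ec \<in> {-1,1::real}" "c = v + R *\<^sub>R cdir (q + ec * h)"
    using corner_char[OF assms(13) w2 cne] unfolding R_def h_def q_def \<theta>_def by blast
  obtain ed where ed: "ed \<in> {-1,1::real}" "d = v + R *\<^sub>R cdir (q + ed * h)"
    using corner_char[OF assms(14) w2 cne] unfolding R_def h_def q_def \<theta>_def by blast
  have clt: "cos (q + h) < cos (q - h)"
    using Q3 Q2 h0 by (intro cos_monotone_0_pi) auto
  have ecd: "ec = -1 \<and> ed = 1"
  proof -
    have "snd d < snd c" by fact
    then have "R * cos (q + ed * h) < R * cos (q + ec * h)" using ec ed by (simp add: cdir_def)
    then have "cos (q + ed * h) < cos (q + ec * h)" using R0 by simp
    then show ?thesis using ec(1) ed(1) clt by auto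
  qed
  have c2: "c = v + R *\<^sub>R cdir (q + (- h))" using ec ecd by simp
  have d2: "d = v + R *\<^sub>R cdir (q + h)" using ed ecd by simp
  have Vc: "cos h * dist v c = \<rho> * cos \<beta>" using c2 R0 coR by (simp add: dist_norm mult.commute)
  have Vd: "cos h * dist v d = \<rho> * cos \<beta>" using d2 R0 coR by (simp add: dist_norm mult.commute)
  have "dist c w = \<bar>R * sin (- h) - \<rho> * sin \<beta>\<bar>"
    unfolding c2 w1(4) \<psi>\<beta> using coR by (intro dist_corner) simp
  then have "cos h * dist c w = \<bar>cos h * (R * sin (- h) - \<rho> * sin \<beta>)\<bar>"
    using co by (simp add: abs_mult)
  also have "cos h * (R * sin (- h) - \<rho> * sin \<beta>) = - (\<rho> * sin (\<beta> + h))"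
    using coR by (simp add: sin_add algebra_simps)
  also have "\<bar>- (\<rho> * sin (\<beta> + h))\<bar> = \<rho> * sin (\<beta> + h)"
  proof -
    have "sin (\<beta> + h) \<ge> 0" using b1 Q4 by (intro sin_ge_zero) auto
    then show ?thesis using w1(3) by simp
  qed
  finally have Dc: "cos h * dist c w = \<rho> * sin (\<beta> + h)" .
  have "dist d w = \<bar>R * sin h - \<rho> * sin \<beta>\<bar>"
    unfolding d2 w1(4) \<psi>\<beta> using coR by (intro dist_corner) simp
  then have "cos h * dist d w = \<bar>cos h * (R * sin h - \<rho> * sin \<beta>)\<bar>"
    using co by (simp add: abs_mult)
  also have "cos h * (R * sin h - \<rho> * sin \<beta>) = \<rho> * sin (h - \<beta>)"
    using coR by (simp add: sin_diff algebra_simps)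
  also have "\<bar>\<rho> * sin (h - \<beta>)\<bar> = \<rho> * sin (h - \<beta>)"
  proof -
    have "sin (h - \<beta>) \<ge> 0" using b1 Q4 by (intro sin_ge_zero) auto
    then show ?thesis using w1(3) by simp
  qed
  finally have Dd: "cos h * dist d w = \<rho> * sin (h - \<beta>)" .
  have S1: "sin (\<beta> + h) \<le> sin (\<psi> + h)"
    using b1 Q1 Q3 h0 unfolding \<psi>\<beta> by (intro sin_le_aux) auto
  have S2: "sin (h - \<beta>) \<le> sin (\<psi> + h)"
    using b1 Q2 Q3 h0 unfolding \<psi>\<beta> by (intro sin_le_aux) auto
  have cp: "0 \<le> cos (pi/4 - h/2)" using h0 Q4 by (intro cos_ge_zero) auto
  have bneg: "\<beta> \<le> 0" if "i = k" "dist c w \<le> dist d w"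
  proof -
    have "cos h * dist c w \<le> cos h * dist d w" using that co by (intro mult_left_mono) auto
    then have "\<rho> * sin (\<beta> + h) \<le> \<rho> * sin (h - \<beta>)" using Dc Dd by simp
    then have "sin (\<beta> + h) \<le> sin (h - \<beta>)" using w1(3) by simp
    then have "\<beta> + h \<le> h - \<beta>" using b1 Q4 h0 by (subst (asm) sin_mono_le_eq) auto
    then show ?thesis by simp
  qed
  have S3: "cos \<beta> + sin (\<beta> + h) \<le> cos \<psi> + sin (\<psi> + h)"
  proof (rule F_le[OF cp])
    have A: "q + 2 * \<beta> \<le> pi/2 - h"
    proof (cases "1 \<le> i \<and> i \<le> k - 1")
      case True then show ?thesis using Q5 b1 by auto
    next
      case False then have "i = k" "dist c w \<le> dist d w" using assms(16) by auto
      then show ?thesis using bneg Q2 by auto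
    qed
    have e: "\<bar>\<beta> - (pi / 4 - h / 2)\<bar> = (pi / 4 - h / 2) - \<beta>"
      using b1 Q4 by (subst abs_of_nonpos) linarith+
    show "\<bar>\<psi> - (pi / 4 - h / 2)\<bar> \<le> \<bar>\<beta> - (pi / 4 - h / 2)\<bar>"
      unfolding \<psi>\<beta> e
    proof (rule abs_leI)
      show "q + \<beta> - (pi / 4 - h / 2) \<le> pi / 4 - h / 2 - \<beta>" using A by linarith
      show "- (q + \<beta> - (pi / 4 - h / 2)) \<le> pi / 4 - h / 2 - \<beta>" using Q3 h0 by linarith
    qed
    show "\<bar>\<beta> - (pi / 4 - h / 2)\<bar> \<le> pi" using b1 Q4 h0 unfolding e by linarith
  qed
  have S4: "cos \<beta> + sin (h - \<beta>) \<le> cos \<psi> + sin (\<psi> + h)"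
  proof -
    have "cos (- \<beta>) + sin (- \<beta> + h) \<le> cos \<psi> + sin (\<psi> + h)"
    proof (rule F_le[OF cp])
      have e: "\<bar>- \<beta> - (pi / 4 - h / 2)\<bar> = \<beta> + (pi / 4 - h / 2)"
        using b1 Q4 by (subst abs_of_nonpos) linarith+
      show "\<bar>\<psi> - (pi / 4 - h / 2)\<bar> \<le> \<bar>- \<beta> - (pi / 4 - h / 2)\<bar>"
        unfolding \<psi>\<beta> e
      proof (rule abs_leI)
        show "q + \<beta> - (pi / 4 - h / 2) \<le> \<beta> + (pi / 4 - h / 2)" using Q2 by linarith
        show "- (q + \<beta> - (pi / 4 - h / 2)) \<le> \<beta> + (pi / 4 - h / 2)" using Q3 b1 by linarith
      qed
      show "\<bar>- \<beta> - (pi / 4 - h / 2)\<bar> \<le> pi" using b1 Q4 h0 unfolding e by linarith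
    qed
    then show ?thesis by simp
  qed
  have r0: "\<rho> \<ge> 0" using w1(3) by simp
  have "cos h * (dist v c + dist c w) \<le> cos h * (dist v a + dist a w)"
    using mult_left_mono[OF S3 r0] Vc Dc Va' Aw by (simp add: algebra_simps)
  then have E1: "dist v c + dist c w \<le> dist v a + dist a w" using co by simp
  have "cos h * (dist v d + dist d w) \<le> cos h * (dist v a + dist a w)"
    using mult_left_mono[OF S4 r0] Vd Dd Va' Aw by (simp add: algebra_simps)
  then have E2: "dist v d + dist d w \<le> dist v a + dist a w" using co by simp
  have "cos h * dist c w \<le> cos h * dist a w"
    using mult_left_mono[OF S1 r0] Dc Aw by simp
  then have E3: "dist c w \<le> dist a w" using co by simp
  have "cos h * dist d w \<le> cos h * dist a w"
    using mult_left_mono[OF S2 r0] Dd Aw by simp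
  then have E4: "dist d w \<le> dist a w" using co by simp
  show ?thesis using E1 E2 E3 E4 by simp
qed

end
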